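(* Let $H = C_5 + C_5 + C_5 + C_5 + C_5 + C_5$ be the Zykov sum of six disjoint $5$-cycles. Let $v\in V(H)$ and let $S$ be the subgraph of $H$ induced by the vertices of the five $5$-cycles not containing $v$. Suppose the edges of $H$ are colored in three colors $1,2,3$ with no monochromatic triangle. Then for each color $i\in\{1,2,3\}$ we have $N_i(v)\cap V(S)\neq\emptyset$, where $N_i(v)$ is the set of vertices $u$ adjacent to $v$ such that the edge $vu$ has color $i$.
   Context: All graphs are finite, undirected, without loops or multiple edges. The Zykov sum $G_1+G_2$ of two vertex-disjoint graphs is obtained by joining every vertex of $G_1$ to every vertex of $G_2$. *)

theory Defs
  imports Main
begin

definition C5_adj :: "nat \<Rightarrow> nat \<Rightarrow> bool" where
  "C5_adj a b \<longleftrightarrow> a < 5 \<and> b < 5 \<and> (b = (a + 1) mod 5 \<or> a = (b + 1) mod 5)"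

text \<open>Vertex (i,a) is vertex a of the i-th copy, i < 6.  Vertices in different copies
  are all joined; inside a copy the C5 adjacency is used.\<close>
definition H_verts :: "(nat \<times> nat) set" where
  "H_verts = {0..<6} \<times> {0..<5}"

definition H_adj :: "nat \<times> nat \<Rightarrow> nat \<times> nat \<Rightarrow> bool" where
  "H_adj x y \<longleftrightarrow> x \<in> H_verts \<and> y \<in> H_verts \<and>
     (fst x \<noteq> fst y \<or> (fst x = fst y \<and> C5_adj (snd x) (snd y)))"

definition S_verts :: "nat \<times> nat \<Rightarrow> (nat \<times> nat) set" where
  "S_verts v = {u \<in> H_verts. fst u \<noteq> fst v}"

definition good_colouring :: "((nat \<times> nat) set \<Rightarrow> nat) \<Rightarrow> bool" where
  "good_colouring c \<longleftrightarrow>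
     (\<forall>x y. H_adj x y \<longrightarrow> c {x, y} \<in> {1, 2, 3}) \<and>
     (\<forall>x y z. H_adj x y \<and> H_adj y z \<and> H_adj x z \<longrightarrow>
        \<not> (c {x, y} = c {y, z} \<and> c {y, z} = c {x, z}))"

definition N_col :: "((nat \<times> nat) set \<Rightarrow> nat) \<Rightarrow> nat \<Rightarrow> nat \<times> nat \<Rightarrow> (nat \<times> nat) set" where
  "N_col c i v = {u. H_adj v u \<and> c {v, u} = i}"

end

theory Submission
  imports Defs
begin

lemma three_of:
  assumes "3 \<le> card (A::'a set)"
  obtains x y z where "x \<in> A" "y \<in> A" "z \<in> A" "x \<noteq> y" "y \<noteq> z" "x \<noteq> z"
proof -
  obtain T where "T \<subseteq> A" "card T = 3" using obtain_subset_with_card_n[OF assms] by blast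
  then show ?thesis using that by (auto simp: card_3_iff)
qed

lemma ramsey_step:
  fixes f :: "'a set \<Rightarrow> nat"
  assumes "b \<in> {cA, cB}" "f {x,ya} = b" "f {x,yb} = b" "f {x,yc} = b"
    "f {ya,yb} \<in> {cA,cB}" "f {yb,yc} \<in> {cA,cB}" "f {ya,yc} \<in> {cA,cB}"
    "x \<in> X" "ya \<in> X" "yb \<in> X" "yc \<in> X"
    "x \<noteq> ya" "x \<noteq> yb" "x \<noteq> yc" "ya \<noteq> yb" "yb \<noteq> yc" "ya \<noteq> yc"
  shows "\<exists>x\<in>X. \<exists>y\<in>X. \<exists>z\<in>X. x \<noteq> y \<and> y \<noteq> z \<and> x \<noteq> z \<and>
           f {x,y} = f {y,z} \<and> f {y,z} = f {x,z}"
proof (cases "f {ya,yb} = b \<or> f {yb,yc} = b \<or> f {ya,yc} = b")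
  case True
  then show ?thesis
  proof (elim disjE)
    assume "f {ya,yb} = b"
    then show ?thesis using assms by (intro bexI[of _ x] bexI[of _ ya] bexI[of _ yb]) (auto simp: insert_commute)
  next
    assume "f {yb,yc} = b"
    then show ?thesis using assms by (intro bexI[of _ x] bexI[of _ yb] bexI[of _ yc]) (auto simp: insert_commute)
  next
    assume "f {ya,yc} = b"
    then show ?thesis using assms by (intro bexI[of _ x] bexI[of _ ya] bexI[of _ yc]) (auto simp: insert_commute)
  qed
next
  case False
  then have "f {ya,yb} = f {yb,yc} \<and> f {yb,yc} = f {ya,yc}" using assms by auto
  then show ?thesis using assms by (intro bexI[of _ ya] bexI[of _ yb] bexI[of _ yc]) auto
qed

lemma ramsey33:
  fixes f :: "'a set \<Rightarrow> nat"
  assumes "finite X" "6 \<le> card X"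
    and col: "\<forall>x\<in>X. \<forall>y\<in>X. x \<noteq> y \<longrightarrow> f {x,y} \<in> {b1,b2}"
  shows "\<exists>x\<in>X. \<exists>y\<in>X. \<exists>z\<in>X. x \<noteq> y \<and> y \<noteq> z \<and> x \<noteq> z \<and>
           f {x,y} = f {y,z} \<and> f {y,z} = f {x,z}"
proof -
  have "X \<noteq> {}" using assms(2) by (metis card.empty not_numeral_le_zero)
  then obtain x where x: "x \<in> X" by blast
  define Y where "Y = X - {x}"
  have "card Y = card X - 1" unfolding Y_def using x assms(1) by (simp add: card_Diff_singleton)
  then have cY: "card Y \<ge> 5" using assms(2) by arith
  define Y1 where "Y1 = {y\<in>Y. f {x,y} = b1}"
  define Y2 where "Y2 = {y\<in>Y. f {x,y} \<noteq> b1}"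
  have "Y = Y1 \<union> Y2" "Y1 \<inter> Y2 = {}" "finite Y1" "finite Y2"
    unfolding Y1_def Y2_def Y_def using assms(1) by auto
  then have "card Y1 + card Y2 \<ge> 5" using cY card_Un_disjoint by metis
  then have "3 \<le> card Y1 \<or> 3 \<le> card Y2" by arith
  have Yp: "\<And>y. y \<in> Y \<Longrightarrow> y \<in> X \<and> x \<noteq> y" unfolding Y_def by auto
  have pc: "\<And>y z. y \<in> X \<Longrightarrow> z \<in> X \<Longrightarrow> y \<noteq> z \<Longrightarrow> f {y,z} \<in> {b1,b2}"
    using col by blast
  show ?thesis
  proof (cases "3 \<le> card Y1")
    case True
    then obtain y1 y2 y3 where y: "y1 \<in> Y1" "y2 \<in> Y1" "y3 \<in> Y1" "y1 \<noteq> y2" "y2 \<noteq> y3" "y1 \<noteq> y3"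
      by (rule three_of)
    have m: "y1 \<in> X" "y2 \<in> X" "y3 \<in> X" "x \<noteq> y1" "x \<noteq> y2" "x \<noteq> y3"
      using y Yp unfolding Y1_def by auto
    have e: "f {x,y1} = b1" "f {x,y2} = b1" "f {x,y3} = b1" using y unfolding Y1_def by auto
    show ?thesis
      by (rule ramsey_step[of b1 b1 b2, OF _ e pc pc pc x m(1-3) m(4-6) y(4-6)])
        (simp_all add: m y)
  next
    case False
    then have "3 \<le> card Y2" using \<open>3 \<le> card Y1 \<or> 3 \<le> card Y2\<close> by auto
    then obtain y1 y2 y3 where y: "y1 \<in> Y2" "y2 \<in> Y2" "y3 \<in> Y2" "y1 \<noteq> y2" "y2 \<noteq> y3" "y1 \<noteq> y3"
      by (rule three_of)
    have m: "y1 \<in> X" "y2 \<in> X" "y3 \<in> X" "x \<noteq> y1" "x \<noteq> y2" "x \<noteq> y3"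
      using y Yp unfolding Y2_def by auto
    have "f {x,y1} \<in> {b1,b2}" "f {x,y2} \<in> {b1,b2}" "f {x,y3} \<in> {b1,b2}"
      using pc x m by auto
    then have e: "f {x,y1} = b2" "f {x,y2} = b2" "f {x,y3} = b2" using y unfolding Y2_def by auto
    show ?thesis
      by (rule ramsey_step[of b2 b1 b2, OF _ e pc pc pc x m(1-3) m(4-6) y(4-6)])
        (simp_all add: m y)
  qed
qed

lemma odd_cycle:
  fixes g :: "nat \<Rightarrow> nat"
  assumes "\<forall>a<5. g a \<in> {b1,b2}"
  shows "\<exists>a<5. g a = g (Suc a mod 5)"
proof (rule ccontr)
  assume "\<not> (\<exists>a<5. g a = g (Suc a mod 5))"
  then have H: "\<forall>a<5. g a \<noteq> g (Suc a mod 5)" by simp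
  have n01: "g 0 \<noteq> g 1" using H[rule_format, of 0] by (simp add: numeral_2_eq_2)
  have n12: "g 1 \<noteq> g 2" using H[rule_format, of 1] by (simp add: numeral_2_eq_2)
  have n23: "g 2 \<noteq> g 3" using H[rule_format, of 2] by (simp add: numeral_2_eq_2)
  have n34: "g 3 \<noteq> g 4" using H[rule_format, of 3] by (simp add: numeral_2_eq_2)
  have n40: "g 4 \<noteq> g 0" using H[rule_format, of 4] by (simp add: numeral_2_eq_2)
  have m: "g 0 \<in> {b1,b2}" "g 1 \<in> {b1,b2}" "g 2 \<in> {b1,b2}" "g 3 \<in> {b1,b2}" "g 4 \<in> {b1,b2}"
    using assms[rule_format, of 0] assms[rule_format, of 1] assms[rule_format, of 2]
      assms[rule_format, of 3] assms[rule_format, of 4] by simp_all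
  have "g 2 = g 0" using n01 n12 m(1-3) by auto
  moreover have "g 3 = g 1" using n12 n23 m(2-4) by auto
  moreover have "g 4 = g 0" using \<open>g 2 = g 0\<close> n23 n34 m(3-5) by auto
  ultimately show False using n40 by simp
qed

lemma adj_diff: "r < 6 \<Longrightarrow> s < 6 \<Longrightarrow> a < 5 \<Longrightarrow> b < 5 \<Longrightarrow> r \<noteq> s \<Longrightarrow> H_adj (r,a) (s,b)"
  by (simp add: H_adj_def H_verts_def)

lemma adj_cyc1: "r < 6 \<Longrightarrow> a < 5 \<Longrightarrow> H_adj (r,a) (r,Suc a mod 5)"
  by (simp add: H_adj_def H_verts_def C5_adj_def)

lemma adj_cyc2: "r < 6 \<Longrightarrow> a < 5 \<Longrightarrow> H_adj (r,Suc a mod 5) (r,a)"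
  by (simp add: H_adj_def H_verts_def C5_adj_def)

lemma mod_ne: "a < (5::nat) \<Longrightarrow> Suc a mod 5 \<noteq> a"
  by (cases "a = 4") auto

theorem lemma4:
  fixes c :: "(nat \<times> nat) set \<Rightarrow> nat" and v :: "nat \<times> nat" and i :: nat
  assumes "good_colouring c"
    and "v \<in> H_verts"
    and "i \<in> {1, 2, 3}"
  shows "N_col c i v \<inter> S_verts v \<noteq> {}"
proof
  assume A: "N_col c i v \<inter> S_verts v = {}"
  obtain p q where v: "v = (p,q)" "p < 6" "q < 5" using assms(2) by (cases v) (auto simp: H_verts_def)
  have range: "\<And>x y. H_adj x y \<Longrightarrow> c {x,y} \<in> {1,2,3}" and
    notri: "\<And>x y z. H_adj x y \<Longrightarrow> H_adj y z \<Longrightarrow> H_adj x z \<Longrightarrow>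
        \<not> (c {x, y} = c {y, z} \<and> c {y, z} = c {x, z})"
    using assms(1) unfolding good_colouring_def by blast+
  obtain b1 b2 where B: "{1,2,3::nat} - {i} = {b1,b2}" "b1 \<noteq> b2"
  proof -
    have "i = 1 \<or> i = 2 \<or> i = 3" using assms(3) by auto
    then show ?thesis
    proof (elim disjE)
      assume "i = 1" then show ?thesis by (intro that[of 2 3]) auto
    next
      assume "i = 2" then show ?thesis by (intro that[of 1 3]) auto
    next
      assume "i = 3" then show ?thesis by (intro that[of 1 2]) auto
    qed
  qed
  define R where "R = {0..<6} - {p}"
  have Rr: "\<And>r. r \<in> R \<Longrightarrow> r < 6 \<and> r \<noteq> p" unfolding R_def by auto
  have vadj: "\<And>r a. r \<in> R \<Longrightarrow> a < 5 \<Longrightarrow> H_adj v (r,a)"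
    using Rr v by (metis adj_diff)
  have colS: "\<And>r a. r \<in> R \<Longrightarrow> a < 5 \<Longrightarrow> c {v,(r,a)} \<in> {b1,b2}"
  proof -
    fix r a :: nat assume "r \<in> R" "a < 5"
    then have "(r,a) \<in> S_verts v" "H_adj v (r,a)" using Rr v vadj by (auto simp: S_verts_def H_verts_def)
    then have "c {v,(r,a)} \<noteq> i" using A by (auto simp: N_col_def)
    with range[OF \<open>H_adj v (r,a)\<close>] B(1) show "c {v,(r,a)} \<in> {b1,b2}" by blast
  qed
  have "\<forall>r\<in>R. \<exists>a<5. c {v,(r,a)} = c {v,(r,Suc a mod 5)}"
  proof
    fix r assume r: "r \<in> R"
    have "\<forall>a<5. c {v,(r,a)} \<in> {b1,b2}" using colS r by blast
    then show "\<exists>a<5. c {v,(r,a)} = c {v,(r,Suc a mod 5)}"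
      by (rule odd_cycle[of "\<lambda>a. c {v,(r,a)}" b1 b2])
  qed
  then obtain af where af: "\<And>r. r \<in> R \<Longrightarrow> af r < 5 \<and> c {v,(r,af r)} = c {v,(r,Suc (af r) mod 5)}"
    by metis
  define R1 where "R1 = {r\<in>R. c {v,(r,af r)} = b1}"
  define R2 where "R2 = {r\<in>R. c {v,(r,af r)} = b2}"
  have "R = R1 \<union> R2" using colS af unfolding R1_def R2_def by blast
  moreover have "R1 \<inter> R2 = {}" "finite R1" "finite R2" using B(2) unfolding R1_def R2_def R_def by auto
  moreover have "card R = 5" using v unfolding R_def by auto
  ultimately have "card R1 + card R2 = 5" by (metis card_Un_disjoint)
  then have "3 \<le> card R1 \<or> 3 \<le> card R2" by arith
  then obtain r1 r2 r3 b where rs: "r1 \<in> R" "r2 \<in> R" "r3 \<in> R" "r1 \<noteq> r2" "r2 \<noteq> r3" "r1 \<noteq> r3"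
    and bcol: "c {v,(r1,af r1)} = b" "c {v,(r2,af r2)} = b" "c {v,(r3,af r3)} = b" "b \<in> {1,2,3}"
  proof (elim disjE)
    assume "3 \<le> card R1"
    then obtain x y z where "x \<in> R1" "y \<in> R1" "z \<in> R1" "x \<noteq> y" "y \<noteq> z" "x \<noteq> z" by (rule three_of)
    then show ?thesis using that[of x y z b1] B unfolding R1_def by auto
  next
    assume "3 \<le> card R2"
    then obtain x y z where "x \<in> R2" "y \<in> R2" "z \<in> R2" "x \<noteq> y" "y \<noteq> z" "x \<noteq> z" by (rule three_of)
    then show ?thesis using that[of x y z b2] B unfolding R2_def by auto
  qed
  define X where "X = {(r1,af r1),(r1,Suc (af r1) mod 5),(r2,af r2),(r2,Suc (af r2) mod 5),
     (r3,af r3),(r3,Suc (af r3) mod 5)}"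
  have a5: "af r1 < 5" "af r2 < 5" "af r3 < 5" using af rs by auto
  have r6: "r1 < 6" "r2 < 6" "r3 < 6" using Rr rs by auto
  have m5: "Suc (af r1) mod 5 < 5" "Suc (af r2) mod 5 < 5" "Suc (af r3) mod 5 < 5" by auto
  have ne: "Suc (af r1) mod 5 \<noteq> af r1" "Suc (af r2) mod 5 \<noteq> af r2" "Suc (af r3) mod 5 \<noteq> af r3"
    using a5 mod_ne by auto
  have finX: "finite X" unfolding X_def by simp
  have cardX: "card X = 6" unfolding X_def using rs ne by (simp add: card_insert_if)
  have XR: "\<And>x. x \<in> X \<Longrightarrow> fst x \<in> R \<and> snd x < 5" unfolding X_def using rs a5 by auto
  have rne: "r2 \<noteq> r1" "r3 \<noteq> r2" "r3 \<noteq> r1" using rs by auto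
  have vX: "\<And>x. x \<in> X \<Longrightarrow> H_adj v x \<and> c {v,x} = b"
  proof -
    fix x assume "x \<in> X"
    then show "H_adj v x \<and> c {v,x} = b" unfolding X_def
      apply (elim insertE emptyE)
      using rs a5 vadj bcol af m5 by (simp_all add: vadj)
  qed
  have adjX: "\<And>x y. x \<in> X \<Longrightarrow> y \<in> X \<Longrightarrow> x \<noteq> y \<Longrightarrow> H_adj x y"
  proof -
    fix x y assume "x \<in> X" "y \<in> X" "x \<noteq> y"
    then show "H_adj x y" unfolding X_def
      apply (elim insertE emptyE)
      by (simp_all add: adj_diff adj_cyc1 adj_cyc2 rs rne a5 r6 m5)
  qed
  obtain d1 d2 where D: "{1,2,3::nat} - {b} = {d1,d2}"
  proof -
    have "b = 1 \<or> b = 2 \<or> b = 3" using bcol(4) by auto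
    then show ?thesis
    proof (elim disjE)
      assume "b = 1" then show ?thesis by (intro that[of 2 3]) auto
    next
      assume "b = 2" then show ?thesis by (intro that[of 1 3]) auto
    next
      assume "b = 3" then show ?thesis by (intro that[of 1 2]) auto
    qed
  qed
  have colX: "\<forall>x\<in>X. \<forall>y\<in>X. x \<noteq> y \<longrightarrow> c {x,y} \<in> {d1,d2}"
  proof (intro ballI impI)
    fix x y assume xy: "x \<in> X" "y \<in> X" "x \<noteq> y"
    have h: "H_adj x y" "H_adj v x" "H_adj v y" using adjX vX xy by auto
    have "c {x,y} \<noteq> b" using notri[OF h(2) h(1) h(3)] vX xy by auto
    then show "c {x,y} \<in> {d1,d2}" using range[OF h(1)] D by blast
  qed
  obtain x y z where "x \<in> X" "y \<in> X" "z \<in> X" "x \<noteq> y" "y \<noteq> z" "x \<noteq> z"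
    "c {x,y} = c {y,z}" "c {y,z} = c {x,z}"
    using ramsey33[OF finX _ colX] cardX by (metis order_refl)
  then show False using notri adjX by blast
qed

end
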